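(* Let $n\ge 2$. There is no finite subset $Y\subseteq\mathbb{S}^{n-1}$ which is a spherical design of harmonic index $\{8,2\}$ and has \[|Y|=\frac{n(n+6)(n+5)(n^2+15n+8)^2}{168(n^3+27n^2+356n-240)},\] i.e. there exists no tight spherical design of harmonic index $\{8,2\}$ on $\mathbb{S}^{n-1}$.
   Context: $\mathbb{S}^{n-1}$ is the unit sphere in $\mathbb{R}^n$. For $T\subseteq\mathbb{N}$, a finite $Y\subseteq\mathbb{S}^{n-1}$ is a spherical design of harmonic index $T$ if $\sum_{\mathbf{x}\in Y}f(\mathbf{x})=0$ for every real homogeneous harmonic polynomial $f$ in $n$ variables whose degree lies in $T$. With Gegenbauer polynomials $Q_{n,k}$ (orthogonal on $[-1,1]$ for the weight $(1-x^2)^{(n-3)/2}$, $Q_{n,k}(1)=\binom{n+k-1}{n-1}-\binom{n+k-3}{n-1}$), the polynomial $Q_{n,8}(x)+f_2Q_{n,2}(x)$ with $f_2=\frac{(n-2)(n+4)(n+5)(n+6)(n+14)}{90(n+12)^2}$ equals $a(x^2-\alpha^2)^2(x^2-\beta^2)^2-c_{n,T}$ with $a>0$, $\alpha^2,\beta^2=\frac{7}{n+12}\pm\frac{\sqrt{42(n+5)(n+10)}}{(n+10)(n+12)}$, $c_{n,T}=\frac{(n+2)(n+4)(n+5)(n+8)(n+14)(n^3+27n^2+356n-240)}{240(n+10)(n+12)^3}$, giving the lower bound $|Y|\ge b_{n,T}$ equal to the displayed cardinality for designs of harmonic index $\{8,2\}$; a design attaining it is called tight. *)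

theory Defs
  imports "HOL-Analysis.Analysis"
begin

text \<open>Real polynomials in the variables x_i (i :: 'n, a finite index type, so n = CARD('n))
  are represented by their coefficient functions on exponent vectors (multi-indices)
  alpha :: 'n \<Rightarrow> nat.\<close>

definition multi_indices :: "nat \<Rightarrow> ('n::finite \<Rightarrow> nat) set" where
  "multi_indices k = {\<alpha>. (\<Sum>i\<in>UNIV. \<alpha> i) = k}"

definition homogeneous_coeffs :: "nat \<Rightarrow> (('n::finite \<Rightarrow> nat) \<Rightarrow> real) \<Rightarrow> bool" where
  "homogeneous_coeffs k c \<longleftrightarrow> (\<forall>\<alpha>. c \<alpha> \<noteq> 0 \<longrightarrow> \<alpha> \<in> multi_indices k)"

definition hpoly_eval :: "nat \<Rightarrow> (('n::finite \<Rightarrow> nat) \<Rightarrow> real) \<Rightarrow> real^'n \<Rightarrow> real" where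
  "hpoly_eval k c x = (\<Sum>\<alpha>\<in>multi_indices k. c \<alpha> * (\<Prod>i\<in>UNIV. (x $ i) ^ (\<alpha> i)))"

text \<open>Harmonicity: the Laplacian vanishes. Since the Laplacian of the monomial x^alpha is
  sum_i alpha_i (alpha_i - 1) x^(alpha - 2 e_i), the coefficient of x^beta in the Laplacian
  of sum c_alpha x^alpha is sum_i (beta_i + 2)(beta_i + 1) c_(beta + 2 e_i).\<close>
definition harmonic_coeffs :: "(('n::finite \<Rightarrow> nat) \<Rightarrow> real) \<Rightarrow> bool" where
  "harmonic_coeffs c \<longleftrightarrow>
     (\<forall>\<beta>::'n \<Rightarrow> nat. (\<Sum>i\<in>UNIV. real ((\<beta> i + 2) * (\<beta> i + 1)) * c (\<beta>(i := \<beta> i + 2))) = 0)"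

definition unit_sphere :: "(real^'n::finite) set" where
  "unit_sphere = {x. norm x = 1}"

definition harmonic_index_design :: "nat set \<Rightarrow> (real^'n::finite) set \<Rightarrow> bool" where
  "harmonic_index_design T Y \<longleftrightarrow>
     finite Y \<and> Y \<subseteq> unit_sphere \<and>
     (\<forall>k\<in>T. \<forall>c :: ('n \<Rightarrow> nat) \<Rightarrow> real. homogeneous_coeffs k c \<and> harmonic_coeffs c
        \<longrightarrow> (\<Sum>x\<in>Y. hpoly_eval k c x) = 0)"

end

theory Submission
  imports Defs
begin


definition leset :: "('n::finite \<Rightarrow> nat) \<Rightarrow> ('n \<Rightarrow> nat) set" where
  "leset \<beta> = {\<alpha>. \<forall>i. \<alpha> i \<le> \<beta> i}"

definition fsub :: "('n \<Rightarrow> nat) \<Rightarrow> ('n \<Rightarrow> nat) \<Rightarrow> ('n \<Rightarrow> nat)" where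
  "fsub \<beta> \<alpha> = (\<lambda>i. \<beta> i - \<alpha> i)"

definition fadd :: "('n \<Rightarrow> nat) \<Rightarrow> ('n \<Rightarrow> nat) \<Rightarrow> ('n \<Rightarrow> nat)" where
  "fadd \<beta> \<alpha> = (\<lambda>i. \<beta> i + \<alpha> i)"

lemma finite_leset[simp]: "finite (leset (\<beta>::'n::finite \<Rightarrow> nat))"
proof -
  have "leset \<beta> \<subseteq> PiE UNIV (\<lambda>i. {..\<beta> i})"
    by (auto simp: leset_def PiE_def Pi_def)
  moreover have "finite (PiE (UNIV::'n set) (\<lambda>i. {..\<beta> i}))"
    by (rule finite_PiE) auto
  ultimately show ?thesis by (rule finite_subset)
qed

definition cmul :: "(('n::finite \<Rightarrow> nat) \<Rightarrow> real) \<Rightarrow> (('n \<Rightarrow> nat) \<Rightarrow> real) \<Rightarrow> ('n \<Rightarrow> nat) \<Rightarrow> real" where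
  "cmul p q \<beta> = (\<Sum>\<alpha>\<in>leset \<beta>. p \<alpha> * q (fsub \<beta> \<alpha>))"

lemma cmul_comm: "cmul p q = cmul q p"
proof
  fix \<beta> :: "'a \<Rightarrow> nat"
  show "cmul p q \<beta> = cmul q p \<beta>"
    unfolding cmul_def
    by (rule sum.reindex_bij_witness[where i="fsub \<beta>" and j="fsub \<beta>"])
       (auto simp: leset_def fsub_def fun_eq_iff)
qed

lemma cmul_assoc: "cmul (cmul p q) r = cmul p (cmul q r)"
proof
  fix \<beta> :: "'a \<Rightarrow> nat"
  have "cmul (cmul p q) r \<beta> = (\<Sum>(\<alpha>,\<gamma>)\<in>Sigma (leset \<beta>) leset. p \<gamma> * q (fsub \<alpha> \<gamma>) * r (fsub \<beta> \<alpha>))"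
    unfolding cmul_def by (simp add: sum.Sigma sum_distrib_right)
  also have "\<dots> = (\<Sum>(\<gamma>,\<delta>)\<in>Sigma (leset \<beta>) (\<lambda>\<gamma>. leset (fsub \<beta> \<gamma>)). p \<gamma> * (q \<delta> * r (fsub (fsub \<beta> \<gamma>) \<delta>)))"
    by (rule sum.reindex_bij_witness[where i="\<lambda>(\<gamma>,\<delta>). (fadd \<gamma> \<delta>, \<gamma>)" and j="\<lambda>(\<alpha>,\<gamma>). (\<gamma>, fsub \<alpha> \<gamma>)"])
       (auto simp: leset_def fsub_def fadd_def fun_eq_iff le_diff_conv2 add.commute; meson le_trans diff_le_mono)+
  also have "\<dots> = cmul p (cmul q r) \<beta>"
    unfolding cmul_def by (simp add: sum.Sigma sum_distrib_left)
  finally show "cmul (cmul p q) r \<beta> = cmul p (cmul q r) \<beta>" .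
qed

lemma cmul_add: "cmul p (\<lambda>\<alpha>. q \<alpha> + r \<alpha>) = (\<lambda>\<beta>. cmul p q \<beta> + cmul p r \<beta>)"
  by (auto simp: cmul_def fun_eq_iff algebra_simps sum.distrib)

definition cone :: "('n::finite \<Rightarrow> nat) \<Rightarrow> real" where
  "cone \<alpha> = (if \<alpha> = (\<lambda>_. 0) then 1 else 0)"

lemma cmul_one: "cmul cone p = p"
proof
  fix \<beta> :: "'a \<Rightarrow> nat"
  have "cmul cone p \<beta> = (\<Sum>\<alpha>\<in>leset \<beta>. if \<alpha> = (\<lambda>_. 0) then p (fsub \<beta> \<alpha>) else 0)"
    unfolding cmul_def cone_def by (rule sum.cong) auto
  also have "\<dots> = p (fsub \<beta> (\<lambda>_. 0))"
    by (subst sum.delta[of "leset \<beta>" "(\<lambda>_. 0)"]) (auto simp: leset_def simp del: finite_leset intro: finite_leset[unfolded leset_def])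
  finally show "cmul cone p \<beta> = p \<beta>" by (simp add: fsub_def)
qed

typedef (overloaded) 'n mp = "UNIV :: (('n::finite \<Rightarrow> nat) \<Rightarrow> real) set" by auto

setup_lifting type_definition_mp

instantiation mp :: (finite) comm_ring_1
begin
lift_definition zero_mp :: "'a mp" is "\<lambda>_. 0" .
lift_definition one_mp :: "'a mp" is cone .
lift_definition plus_mp :: "'a mp \<Rightarrow> 'a mp \<Rightarrow> 'a mp" is "\<lambda>p q \<alpha>. p \<alpha> + q \<alpha>" .
lift_definition minus_mp :: "'a mp \<Rightarrow> 'a mp \<Rightarrow> 'a mp" is "\<lambda>p q \<alpha>. p \<alpha> - q \<alpha>" .
lift_definition uminus_mp :: "'a mp \<Rightarrow> 'a mp" is "\<lambda>p \<alpha>. - p \<alpha>" .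
lift_definition times_mp :: "'a mp \<Rightarrow> 'a mp \<Rightarrow> 'a mp" is cmul .
instance
proof
  fix a b c :: "'a mp"
  show "a * b * c = a * (b * c)" by transfer (rule cmul_assoc)
  show "a * b = b * a" by transfer (rule cmul_comm)
  show "1 * a = a" by transfer (rule cmul_one)
  show "(a + b) * c = a * c + b * c" by transfer (metis cmul_add cmul_comm)
  show "a + b + c = a + (b + c)" by transfer (simp add: algebra_simps)
  show "a + b = b + a" by transfer (simp add: algebra_simps)
  show "0 + a = a" by transfer simp
  show "- a + a = 0" by transfer simp
  show "a - b = a + - b" by transfer simp
  show "(0::'a mp) \<noteq> 1" by transfer (auto simp: cone_def fun_eq_iff)
qed
end

definition cdv :: "'n \<Rightarrow> (('n::finite \<Rightarrow> nat) \<Rightarrow> real) \<Rightarrow> ('n \<Rightarrow> nat) \<Rightarrow> real" where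
  "cdv i p \<beta> = real (\<beta> i + 1) * p (\<beta>(i := \<beta> i + 1))"

lemma cdv_leibniz: "cdv i (cmul p q) = (\<lambda>\<beta>. cmul (cdv i p) q \<beta> + cmul p (cdv i q) \<beta>)"
proof
  fix \<beta> :: "'a \<Rightarrow> nat"
  define b' where "b' = \<beta>(i := \<beta> i + 1)"
  have sub1: "leset \<beta> \<subseteq> leset b'" by (auto simp: leset_def b'_def le_SucI)
  have T1: "cmul (cdv i p) q \<beta> = (\<Sum>\<alpha>\<in>leset b'. real (\<alpha> i) * p \<alpha> * q (fsub b' \<alpha>))"
  proof -
    have "cmul (cdv i p) q \<beta> = (\<Sum>\<alpha>\<in>leset b' \<inter> {\<alpha>. \<alpha> i \<ge> 1}. real (\<alpha> i) * p \<alpha> * q (fsub b' \<alpha>))"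
      unfolding cmul_def cdv_def
    proof (rule sum.reindex_bij_witness[where i="\<lambda>\<alpha>. \<alpha>(i := \<alpha> i - 1)" and j="\<lambda>\<alpha>. \<alpha>(i := \<alpha> i + 1)"])
      fix a assume "a \<in> leset b' \<inter> {\<alpha>. 1 \<le> \<alpha> i}"
      then have a1: "\<forall>j. a j \<le> b' j" "1 \<le> a i" by (auto simp: leset_def)
      show "(a(i := a i - 1))(i := (a(i := a i - 1)) i + 1) = a" using a1 by (auto simp: fun_eq_iff)
      show "a(i := a i - 1) \<in> leset \<beta>" unfolding leset_def
      proof (intro CollectI allI)
        fix j show "(a(i := a i - 1)) j \<le> \<beta> j"
        proof (cases "j = i")
          case True then show ?thesis using a1(1)[rule_format, of i] by (simp add: b'_def)
        next
          case False then show ?thesis using a1(1)[rule_format, of j] by (simp add: b'_def)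
        qed
      qed
    next
      fix a assume "a \<in> leset \<beta>"
      then have a1: "\<forall>j. a j \<le> \<beta> j" by (auto simp: leset_def)
      show "(a(i := a i + 1))(i := (a(i := a i + 1)) i - 1) = a" by (auto simp: fun_eq_iff)
      show "a(i := a i + 1) \<in> leset b' \<inter> {\<alpha>. 1 \<le> \<alpha> i}" using a1 by (auto simp: leset_def b'_def)
      have "fsub b' (a(i := a i + 1)) = fsub \<beta> a" by (auto simp: fsub_def b'_def fun_eq_iff)
      then show "real ((a(i := a i + 1)) i) * p (a(i := a i + 1)) * q (fsub b' (a(i := a i + 1))) =
         real (a i + 1) * p (a(i := a i + 1)) * q (fsub \<beta> a)" by simp
    qed
    also have "\<dots> = (\<Sum>\<alpha>\<in>leset b'. real (\<alpha> i) * p \<alpha> * q (fsub b' \<alpha>))"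
      by (rule sum.mono_neutral_left) auto
    finally show ?thesis .
  qed
  have T2: "cmul p (cdv i q) \<beta> = (\<Sum>\<alpha>\<in>leset b'. real (b' i - \<alpha> i) * p \<alpha> * q (fsub b' \<alpha>))"
  proof -
    have "cmul p (cdv i q) \<beta> = (\<Sum>\<alpha>\<in>leset \<beta>. real (b' i - \<alpha> i) * p \<alpha> * q (fsub b' \<alpha>))"
      unfolding cmul_def cdv_def
    proof (rule sum.cong)
      fix \<alpha> assume "\<alpha> \<in> leset \<beta>"
      then have "\<alpha> i \<le> \<beta> i" by (auto simp: leset_def)
      moreover have "(fsub \<beta> \<alpha>)(i := fsub \<beta> \<alpha> i + 1) = fsub b' \<alpha>"
        using \<open>\<alpha> i \<le> \<beta> i\<close> by (auto simp: fsub_def b'_def fun_eq_iff)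
      ultimately show "p \<alpha> * (real (fsub \<beta> \<alpha> i + 1) * q ((fsub \<beta> \<alpha>)(i := fsub \<beta> \<alpha> i + 1))) =
          real (b' i - \<alpha> i) * p \<alpha> * q (fsub b' \<alpha>)"
        by (simp add: fsub_def b'_def Suc_diff_le)
    qed simp
    also have "\<dots> = (\<Sum>\<alpha>\<in>leset b'. real (b' i - \<alpha> i) * p \<alpha> * q (fsub b' \<alpha>))"
    proof (rule sum.mono_neutral_left[OF _ sub1])
      show "\<forall>\<alpha>\<in>leset b' - leset \<beta>. real (b' i - \<alpha> i) * p \<alpha> * q (fsub b' \<alpha>) = 0"
      proof
        fix \<alpha> assume a: "\<alpha> \<in> leset b' - leset \<beta>"
        then obtain j where "\<not> \<alpha> j \<le> \<beta> j" by (auto simp: leset_def)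
        from a have le: "\<And>k. \<alpha> k \<le> b' k" by (auto simp: leset_def)
        have "j = i"
        proof (rule ccontr)
          assume "j \<noteq> i" then have "b' j = \<beta> j" by (simp add: b'_def)
          with le[of j] \<open>\<not> \<alpha> j \<le> \<beta> j\<close> show False by simp
        qed
        moreover have "b' i = \<beta> i + 1" by (simp add: b'_def)
        ultimately have "\<alpha> i = b' i" using le[of i] \<open>\<not> \<alpha> j \<le> \<beta> j\<close> by simp
        then show "real (b' i - \<alpha> i) * p \<alpha> * q (fsub b' \<alpha>) = 0" by simp
      qed
    qed simp
    finally show ?thesis .
  qed
  have "cdv i (cmul p q) \<beta> = (\<Sum>\<alpha>\<in>leset b'. real (b' i) * p \<alpha> * q (fsub b' \<alpha>))"
    unfolding cdv_def cmul_def b'_def by (simp add: sum_distrib_left mult.assoc)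
  also have "\<dots> = (\<Sum>\<alpha>\<in>leset b'. real (\<alpha> i) * p \<alpha> * q (fsub b' \<alpha>) + real (b' i - \<alpha> i) * p \<alpha> * q (fsub b' \<alpha>))"
  proof (rule sum.cong)
    fix \<alpha> assume "\<alpha> \<in> leset b'"
    then have "\<alpha> i \<le> b' i" by (auto simp: leset_def)
    then have eqb: "real (b' i) = real (\<alpha> i) + real (b' i - \<alpha> i)" by simp
    show "real (b' i) * p \<alpha> * q (fsub b' \<alpha>) = real (\<alpha> i) * p \<alpha> * q (fsub b' \<alpha>) + real (b' i - \<alpha> i) * p \<alpha> * q (fsub b' \<alpha>)"
      by (simp only: eqb distrib_right)
  qed simp
  also have "\<dots> = cmul (cdv i p) q \<beta> + cmul p (cdv i q) \<beta>"
    by (simp add: T1 T2 sum.distrib)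
  finally show "cdv i (cmul p q) \<beta> = cmul (cdv i p) q \<beta> + cmul p (cdv i q) \<beta>" .
qed


lift_definition dv :: "'n \<Rightarrow> 'n::finite mp \<Rightarrow> 'n mp" is cdv .

lemma dv_mult: "dv i (p * q) = dv i p * q + p * dv i q"
  by transfer (rule cdv_leibniz)

lemma dv_add: "dv i (p + q) = dv i p + dv i q"
  by transfer (auto simp: cdv_def fun_eq_iff algebra_simps)

lemma dv_diff: "dv i (p - q) = dv i p - dv i q"
  by transfer (auto simp: cdv_def fun_eq_iff algebra_simps)

lemma dv_zero: "dv i 0 = 0"
  by transfer (auto simp: cdv_def fun_eq_iff)

lemma dv_sum: "dv i (\<Sum>j\<in>A. f j) = (\<Sum>j\<in>A. dv i (f j))"
  by (induction A rule: infinite_finite_induct) (auto simp: dv_zero dv_add)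

lift_definition cst :: "real \<Rightarrow> 'n::finite mp" is "\<lambda>s \<alpha>. if \<alpha> = (\<lambda>_. 0) then s else 0" .

lemma dv_cst: "dv i (cst s) = 0"
  by transfer (auto simp: cdv_def fun_eq_iff dest: fun_cong[where x=i])

lemma cst_one: "cst 1 = 1"
  by transfer (simp add: cone_def fun_eq_iff)

lemma dv_one: "dv i 1 = 0"
  using dv_cst[of i 1] by (simp add: cst_one)

lemma Rep_cst_mult: "Rep_mp (cst s * p) \<beta> = s * Rep_mp p \<beta>"
proof transfer
  fix s :: real and p :: "('a \<Rightarrow> nat) \<Rightarrow> real" and \<beta> :: "'a \<Rightarrow> nat"
  have "cmul (\<lambda>\<alpha>. if \<alpha> = (\<lambda>_. 0) then s else 0) p \<beta> = (\<Sum>\<alpha>\<in>leset \<beta>. if \<alpha> = (\<lambda>_. 0) then s * p (fsub \<beta> \<alpha>) else 0)"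
    unfolding cmul_def by (rule sum.cong) auto
  also have "\<dots> = s * p (fsub \<beta> (\<lambda>_. 0))"
    by (subst sum.delta[of "leset \<beta>" "(\<lambda>_. 0)"]) (auto simp: leset_def simp del: finite_leset intro: finite_leset[unfolded leset_def])
  finally show "cmul (\<lambda>\<alpha>. if \<alpha> = (\<lambda>_. 0) then s else 0) p \<beta> = s * p \<beta>" by (simp add: fsub_def)
qed

lemma cst_mult: "cst a * cst b = cst (a * b)"
  by (rule Rep_mp_inject[THEN iffD1]) (auto simp: fun_eq_iff Rep_cst_mult cst.rep_eq)

lemma cst_add: "cst a + cst b = cst (a + b)"
  by transfer (auto simp: fun_eq_iff)

lemma cst_zero: "cst 0 = 0"
  by transfer (auto simp: fun_eq_iff)

lemma of_nat_mp: "(of_nat m :: 'n::finite mp) = cst (real m)"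
  by (induction m) (auto simp: cst_zero cst_one[symmetric] cst_add add.commute)

lemma dv_of_nat: "dv i (of_nat m) = 0"
  by (simp add: of_nat_mp dv_cst)

definition evec :: "'n \<Rightarrow> ('n \<Rightarrow> nat)" where
  "evec i = (\<lambda>j. if j = i then 1 else 0)"

lift_definition Xv :: "'n \<Rightarrow> 'n::finite mp" is "\<lambda>i \<alpha>. if \<alpha> = evec i then 1 else 0" .

lemma dv_X: "dv k (Xv i) = (if k = i then 1 else 0)"
proof (cases "k = i")
  case True
  then show ?thesis
    by (simp, transfer) (auto simp: cdv_def cone_def fun_eq_iff evec_def split: if_splits)
next
  case False
  then show ?thesis
    by (simp, transfer) (auto simp: cdv_def fun_eq_iff evec_def dest: fun_cong[where x=k])
qed

lemma dv_power: "dv i (p ^ m) = of_nat m * p ^ (m - 1) * dv i p"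
proof (induction m)
  case 0 then show ?case by (simp add: dv_one)
next
  case (Suc m)
  show ?case
  proof (cases m)
    case 0 then show ?thesis by (simp add: dv_mult dv_one)
  next
    case (Suc k)
    then show ?thesis using Suc.IH by (simp add: dv_mult algebra_simps)
  qed
qed

definition lapl :: "'n::finite mp \<Rightarrow> 'n mp" where
  "lapl p = (\<Sum>i\<in>UNIV. dv i (dv i p))"

definition gsq :: "'n::finite mp \<Rightarrow> 'n mp \<Rightarrow> 'n mp" where
  "gsq p q = (\<Sum>i\<in>UNIV. dv i p * dv i q)"

lemma lapl_mult: "lapl (p * q) = lapl p * q + p * lapl q + 2 * gsq p q"
  unfolding lapl_def gsq_def
  by (simp add: dv_mult dv_add sum.distrib sum_distrib_left sum_distrib_right algebra_simps)

lemma lapl_power: "lapl (p ^ m) = of_nat m * p ^ (m - 1) * lapl p + of_nat (m * (m - 1)) * p ^ (m - 2) * gsq p p"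
proof (induction m)
  case 0 then show ?case by (simp add: lapl_def dv_one dv_zero)
next
  case (Suc m)
  have g: "gsq p (p ^ m) = of_nat m * p ^ (m - 1) * gsq p p"
    unfolding gsq_def by (simp add: dv_power sum_distrib_left algebra_simps)
  have "lapl (p ^ Suc m) = lapl p * p ^ m + p * lapl (p ^ m) + 2 * gsq p (p ^ m)"
    by (simp add: lapl_mult)
  also have "\<dots> = lapl p * p ^ m + p * (of_nat m * p ^ (m - 1) * lapl p + of_nat (m * (m - 1)) * p ^ (m - 2) * gsq p p)
      + 2 * (of_nat m * p ^ (m - 1) * gsq p p)"
    by (simp only: Suc.IH g)
  also have "\<dots> = of_nat (Suc m) * p ^ (Suc m - 1) * lapl p + of_nat (Suc m * (Suc m - 1)) * p ^ (Suc m - 2) * gsq p p"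
  proof (cases m)
    case 0 then show ?thesis by simp
  next
    case (Suc k)
    show ?thesis
    proof (cases k)
      case 0 with Suc show ?thesis by (simp add: algebra_simps)
    next
      case (Suc j)
      with \<open>m = Suc k\<close> show ?thesis by (simp add: algebra_simps)
    qed
  qed
  finally show ?case .
qed


lemma dv_cst_mult: "dv i (cst c * p) = cst c * dv i p"
  by (simp add: dv_mult dv_cst)

lemma dv_of_nat_mult: "dv i (of_nat k * p) = of_nat k * dv i p"
  by (simp add: dv_mult dv_of_nat)

definition Dp :: "real^'n \<Rightarrow> 'n::finite mp" where
  "Dp y = (\<Sum>j\<in>UNIV. cst (y $ j) * Xv j)"

definition Lp :: "'n::finite mp" where
  "Lp = (\<Sum>j\<in>UNIV. Xv j * Xv j)"

lemma dv_D: "dv i (Dp y) = cst (y $ i)"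
proof -
  have "dv i (Dp y) = (\<Sum>j\<in>UNIV. if i = j then cst (y $ j) else 0)"
    unfolding Dp_def dv_sum by (rule sum.cong) (auto simp: dv_cst_mult dv_X)
  then show ?thesis by simp
qed

lemma dv_L: "dv i Lp = 2 * Xv i"
proof -
  have "dv i Lp = (\<Sum>j\<in>UNIV. if i = j then 2 * Xv j else 0)"
    unfolding Lp_def dv_sum by (rule sum.cong) (auto simp: dv_mult dv_X)
  then show ?thesis by simp
qed

lemma lapl_add: "lapl (p + q) = lapl p + lapl q"
  by (simp add: lapl_def dv_add sum.distrib)

lemma lapl_diff: "lapl (p - q) = lapl p - lapl q"
  by (simp add: lapl_def dv_diff sum_subtractf)

lemma lapl_of_nat_mult: "lapl (of_nat k * p) = of_nat k * lapl p"
  by (simp add: lapl_def dv_of_nat_mult sum_distrib_left)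

lemma lapl_D: "lapl (Dp y) = 0"
  by (simp add: lapl_def dv_D dv_cst)

lemma lapl_L: "lapl (Lp :: 'n::finite mp) = of_nat (2 * CARD('n))"
proof -
  have "lapl (Lp :: 'n mp) = (\<Sum>i\<in>(UNIV::'n set). 2)"
    unfolding lapl_def by (rule sum.cong) (auto simp: dv_L dv_mult dv_X dv_of_nat[of _ 2, simplified])
  then show ?thesis by simp
qed

lemma gsq_comm: "gsq p q = gsq q p"
  by (simp add: gsq_def mult.commute)

lemma cst_sum: "cst (\<Sum>i\<in>A. f i) = (\<Sum>i\<in>A. cst (f i))"
  by (induction A rule: infinite_finite_induct) (auto simp: cst_zero cst_add[symmetric])

lemma gsq_DD: "gsq (Dp y) (Dp y) = cst (y \<bullet> y)"
  unfolding gsq_def inner_vec_def cst_sum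
  by (rule sum.cong) (auto simp: dv_D cst_mult)

lemma gsq_LD: "gsq Lp (Dp y) = 2 * Dp y"
  unfolding gsq_def dv_D dv_L
  unfolding Dp_def sum_distrib_left
  by (rule sum.cong) (auto simp: algebra_simps)

lemma gsq_LL: "gsq Lp Lp = 4 * Lp"
  unfolding gsq_def dv_L
  unfolding Lp_def sum_distrib_left
  by (rule sum.cong) (auto simp: algebra_simps)

lemma gsq_power: "gsq (p ^ a) (q ^ b) = of_nat a * of_nat b * p ^ (a - 1) * q ^ (b - 1) * gsq p q"
  unfolding gsq_def sum_distrib_left
  by (rule sum.cong) (auto simp: dv_power algebra_simps)

lemma lapl_DL: "y \<bullet> y = 1 \<Longrightarrow> lapl (Dp y ^ a * Lp ^ b) =
   of_nat (a * (a - 1)) * Dp y ^ (a - 2) * Lp ^ b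
 + of_nat b * of_nat (2 * CARD('n)) * Dp y ^ a * Lp ^ (b - 1)
 + of_nat (b * (b - 1)) * 4 * Dp y ^ a * Lp ^ (b - 2) * Lp
 + 4 * of_nat a * of_nat b * Dp y ^ (a - 1) * Lp ^ (b - 1) * (Dp y :: 'n::finite mp)"
  by (simp add: lapl_mult lapl_power gsq_power lapl_D lapl_L gsq_DD gsq_LL gsq_comm[of "Dp y"] gsq_LD cst_one algebra_simps)


definition Zp :: "real^'n \<Rightarrow> 'n::finite mp" where
  "Zp y = (let n = CARD('n) in
      of_nat ((n+12)*(n+10)*(n+8)*(n+6)) * (Dp y ^ 8 * Lp ^ 0)
    - of_nat (28*(n+10)*(n+8)*(n+6)) * (Dp y ^ 6 * Lp ^ 1)
    + of_nat (210*(n+8)*(n+6)) * (Dp y ^ 4 * Lp ^ 2)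
    - of_nat (420*(n+6)) * (Dp y ^ 2 * Lp ^ 3)
    + of_nat 105 * (Dp y ^ 0 * Lp ^ 4))"

lemma lapl_Zp: "y \<bullet> y = 1 \<Longrightarrow> lapl (Zp y) = 0"
  unfolding Zp_def Let_def
  apply (simp only: lapl_add lapl_diff lapl_of_nat_mult lapl_DL)
  apply (simp add: algebra_simps)
  apply (simp add: eval_nat_numeral algebra_simps)
  done

definition Q2p :: "real^'n \<Rightarrow> 'n::finite mp" where
  "Q2p y = of_nat (CARD('n)) * (Dp y ^ 2 * Lp ^ 0) - of_nat 1 * (Dp y ^ 0 * Lp ^ 1)"

lemma lapl_Q2p: "y \<bullet> y = 1 \<Longrightarrow> lapl (Q2p y) = 0"
  unfolding Q2p_def
  apply (simp only: lapl_add lapl_diff lapl_of_nat_mult lapl_DL)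
  apply (simp add: algebra_simps)
  done


lemma Rep_sum: "Rep_mp (\<Sum>i\<in>A. f i) \<beta> = (\<Sum>i\<in>A. Rep_mp (f i) \<beta>)"
  by (induction A rule: infinite_finite_induct) (auto simp: zero_mp.rep_eq plus_mp.rep_eq)

lemma harmonic_of_lapl: "lapl p = 0 \<Longrightarrow> harmonic_coeffs (Rep_mp p)"
proof -
  assume h: "lapl p = 0"
  show ?thesis unfolding harmonic_coeffs_def
  proof
    fix \<beta> :: "'a \<Rightarrow> nat"
    have "0 = Rep_mp (lapl p) \<beta>" by (simp add: h zero_mp.rep_eq)
    also have "\<dots> = (\<Sum>i\<in>UNIV. real ((\<beta> i + 2) * (\<beta> i + 1)) * Rep_mp p (\<beta>(i := \<beta> i + 2)))"
      unfolding lapl_def Rep_sum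
      by (rule sum.cong) (auto simp: dv.rep_eq cdv_def algebra_simps)
    finally show "(\<Sum>i\<in>UNIV. real ((\<beta> i + 2) * (\<beta> i + 1)) * Rep_mp p (\<beta>(i := \<beta> i + 2))) = 0" by simp
  qed
qed

definition hom :: "nat \<Rightarrow> 'n::finite mp \<Rightarrow> bool" where
  "hom k p \<longleftrightarrow> homogeneous_coeffs k (Rep_mp p)"

lemma hom_iff: "hom k p \<longleftrightarrow> (\<forall>\<alpha>. Rep_mp p \<alpha> \<noteq> 0 \<longrightarrow> sum \<alpha> UNIV = k)"
  by (simp add: hom_def homogeneous_coeffs_def multi_indices_def)

lemma sum_fsub: "\<alpha> \<in> leset \<beta> \<Longrightarrow> sum \<beta> UNIV = sum \<alpha> UNIV + sum (fsub \<beta> \<alpha>) UNIV"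
proof -
  assume "\<alpha> \<in> leset \<beta>"
  then have "\<beta> i = \<alpha> i + fsub \<beta> \<alpha> i" for i by (auto simp: leset_def fsub_def)
  then have "sum \<beta> UNIV = (\<Sum>i\<in>UNIV. \<alpha> i + fsub \<beta> \<alpha> i)" by (metis (no_types, lifting) sum.cong)
  then show ?thesis by (simp add: sum.distrib)
qed

lemma hom_mult: "hom k p \<Longrightarrow> hom l q \<Longrightarrow> hom (k + l) (p * q)"
  unfolding hom_iff
proof (intro allI impI)
  fix \<beta> assume hp: "\<forall>\<alpha>. Rep_mp p \<alpha> \<noteq> 0 \<longrightarrow> sum \<alpha> UNIV = k"
    and hq: "\<forall>\<alpha>. Rep_mp q \<alpha> \<noteq> 0 \<longrightarrow> sum \<alpha> UNIV = l"
    and ne: "Rep_mp (p * q) \<beta> \<noteq> 0"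
  from ne obtain \<alpha> where a: "\<alpha> \<in> leset \<beta>" "Rep_mp p \<alpha> * Rep_mp q (fsub \<beta> \<alpha>) \<noteq> 0"
    unfolding times_mp.rep_eq cmul_def by (meson sum.not_neutral_contains_not_neutral)
  then show "sum \<beta> UNIV = k + l" using hp hq sum_fsub[OF a(1)] by auto
qed

lemma hom_add: "hom k p \<Longrightarrow> hom k q \<Longrightarrow> hom k (p + q)"
  unfolding hom_iff plus_mp.rep_eq by (metis add.right_neutral add_0)

lemma hom_diff: "hom k p \<Longrightarrow> hom k q \<Longrightarrow> hom k (p - q)"
  unfolding hom_iff minus_mp.rep_eq by (metis diff_self)

lemma hom_cst: "hom 0 (cst s)"
  unfolding hom_iff cst.rep_eq by auto

lemma hom_of_nat: "hom 0 (of_nat m)"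
  by (simp add: of_nat_mp hom_cst)

lemma hom_one: "hom 0 1"
  using hom_cst[of 1] by (simp add: cst_one)

lemma hom_power: "hom k p \<Longrightarrow> hom (m * k) (p ^ m)"
  by (induction m) (auto simp: hom_one intro: hom_mult)

lemma hom_sum: "(\<And>i. i \<in> A \<Longrightarrow> hom k (f i)) \<Longrightarrow> hom k (\<Sum>i\<in>A. f i)"
proof (induction A rule: infinite_finite_induct)
  case (insert x F)
  then show ?case by (simp add: hom_add)
qed (auto simp: hom_iff zero_mp.rep_eq)

lemma hom_X: "hom 1 (Xv i)"
  unfolding hom_iff Xv.rep_eq by (auto simp: evec_def)

lemma hom_D: "hom 1 (Dp y)"
  unfolding Dp_def by (rule hom_sum) (metis add_0 hom_X hom_cst hom_mult)

lemma hom_L: "hom 2 Lp"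
  unfolding Lp_def by (rule hom_sum) (metis one_add_one hom_X hom_mult)


definition mon :: "('n::finite \<Rightarrow> nat) \<Rightarrow> real^'n \<Rightarrow> real" where
  "mon \<alpha> x = (\<Prod>i\<in>UNIV. (x $ i) ^ (\<alpha> i))"

definition ev :: "nat \<Rightarrow> 'n::finite mp \<Rightarrow> real^'n \<Rightarrow> real" where
  "ev k p x = hpoly_eval k (Rep_mp p) x"

lemma ev_alt: "ev k p x = (\<Sum>\<alpha>\<in>multi_indices k. Rep_mp p \<alpha> * mon \<alpha> x)"
  by (simp add: ev_def hpoly_eval_def mon_def)

lemma finite_MI: "finite (multi_indices k :: ('n::finite \<Rightarrow> nat) set)"
proof -
  have le: "\<alpha> i \<le> sum \<alpha> UNIV" for \<alpha> :: "'n \<Rightarrow> nat" and i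
    by (rule member_le_sum) simp_all
  have "multi_indices k \<subseteq> leset (\<lambda>_::'n. k)"
  proof
    fix \<alpha> :: "'n \<Rightarrow> nat" assume "\<alpha> \<in> multi_indices k"
    then have "sum \<alpha> UNIV = k" by (simp add: multi_indices_def)
    then show "\<alpha> \<in> leset (\<lambda>_. k)" using le[of \<alpha>] by (simp add: leset_def)
  qed
  then show ?thesis using finite_subset finite_leset by blast
qed

lemma mon_fadd: "mon (fadd \<alpha> \<gamma>) x = mon \<alpha> x * mon \<gamma> x"
  by (simp add: mon_def fadd_def power_add prod.distrib)

lemma ev_add: "ev k (p + q) x = ev k p x + ev k q x"
  by (simp add: ev_alt plus_mp.rep_eq sum.distrib distrib_right)

lemma ev_diff: "ev k (p - q) x = ev k p x - ev k q x"
  by (simp add: ev_alt minus_mp.rep_eq sum_subtractf left_diff_distrib)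

lemma ev_cst_mult: "ev k (cst s * p) x = s * ev k p x"
  by (simp add: ev_alt Rep_cst_mult sum_distrib_left mult.assoc)

lemma ev_of_nat_mult: "ev k (of_nat m * p) x = real m * ev k p x"
  by (simp add: of_nat_mp ev_cst_mult)

lemma ev_sum: "ev k (\<Sum>i\<in>A. f i) x = (\<Sum>i\<in>A. ev k (f i) x)"
proof (induction A rule: infinite_finite_induct)
  case (insert a F) then show ?case by (simp add: ev_add)
qed (auto simp: ev_alt zero_mp.rep_eq)

lemma ev_X: "ev 1 (Xv i) x = x $ i"
proof -
  have "evec i \<in> multi_indices 1" by (simp add: multi_indices_def evec_def)
  have "ev 1 (Xv i) x = (\<Sum>\<alpha>\<in>multi_indices 1. if \<alpha> = evec i then mon (evec i) x else 0)"
    unfolding ev_alt Xv.rep_eq by (rule sum.cong) auto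
  also have "\<dots> = mon (evec i) x"
    using \<open>evec i \<in> multi_indices 1\<close> by (subst sum.delta[OF finite_MI]) simp
  also have "\<dots> = x $ i"
    unfolding mon_def evec_def by (simp add: if_distrib[of "\<lambda>c. _ ^ c"] prod.delta' cong: if_cong)
  finally show ?thesis .
qed

lemma MI_0: "multi_indices 0 = {(\<lambda>_::'n::finite. 0)}"
  by (auto simp: multi_indices_def fun_eq_iff)

lemma ev_one: "ev 0 (1::'n::finite mp) x = 1"
  by (simp add: ev_alt MI_0 one_mp.rep_eq cone_def mon_def)

lemma fadd_fsub: "\<alpha> \<in> leset \<beta> \<Longrightarrow> fadd \<alpha> (fsub \<beta> \<alpha>) = \<beta>"
  by (auto simp: fadd_def fsub_def leset_def fun_eq_iff)

lemma fsub_fadd: "fsub (fadd \<alpha> \<gamma>) \<alpha> = \<gamma>"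
  by (auto simp: fadd_def fsub_def fun_eq_iff)

lemma sum_fadd: "sum (fadd \<alpha> \<gamma>) UNIV = sum \<alpha> UNIV + sum \<gamma> UNIV"
  by (simp add: fadd_def sum.distrib)

lemma le_fadd: "\<alpha> \<in> leset (fadd \<alpha> \<gamma>)"
  by (simp add: fadd_def leset_def)

lemma mon_split: "\<alpha> \<in> leset \<beta> \<Longrightarrow> mon \<beta> x = mon \<alpha> x * mon (fsub \<beta> \<alpha>) x"
  by (metis fadd_fsub mon_fadd)

lemma ev_mult:
  assumes hp: "hom k p" and hq: "hom l q"
  shows "ev (k + l) (p * q) x = ev k p x * ev l q x"
proof -
  let ?P = "Rep_mp p" and ?Q = "Rep_mp q"
  have "ev (k + l) (p * q) x = (\<Sum>\<beta>\<in>multi_indices (k+l). \<Sum>\<alpha>\<in>leset \<beta>. ?P \<alpha> * ?Q (fsub \<beta> \<alpha>) * mon \<beta> x)"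
    by (simp add: ev_alt times_mp.rep_eq cmul_def sum_distrib_right)
  also have "\<dots> = (\<Sum>\<beta>\<in>multi_indices (k+l). \<Sum>\<alpha>\<in>leset \<beta> \<inter> multi_indices k. ?P \<alpha> * ?Q (fsub \<beta> \<alpha>) * mon \<beta> x)"
  proof (rule sum.cong[OF refl], rule sum.mono_neutral_right)
    fix \<beta> :: "'a \<Rightarrow> nat"
    show "\<forall>\<alpha>\<in>leset \<beta> - leset \<beta> \<inter> multi_indices k. ?P \<alpha> * ?Q (fsub \<beta> \<alpha>) * mon \<beta> x = 0"
      using hp by (auto simp: hom_iff multi_indices_def)
  qed auto
  also have "\<dots> = (\<Sum>(\<beta>,\<alpha>)\<in>Sigma (multi_indices (k+l)) (\<lambda>\<beta>. leset \<beta> \<inter> multi_indices k). ?P \<alpha> * ?Q (fsub \<beta> \<alpha>) * mon \<beta> x)"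
    by (rule sum.Sigma) (auto simp: finite_MI)
  also have "\<dots> = (\<Sum>(\<alpha>,\<gamma>)\<in>multi_indices k \<times> multi_indices l. (?P \<alpha> * mon \<alpha> x) * (?Q \<gamma> * mon \<gamma> x))"
    apply (rule sum.reindex_bij_witness[where j="\<lambda>(\<beta>,\<alpha>). (\<alpha>, fsub \<beta> \<alpha>)" and i="\<lambda>(\<alpha>,\<gamma>). (fadd \<alpha> \<gamma>, \<alpha>)"])
        apply (auto simp: fadd_fsub fsub_fadd sum_fadd le_fadd mon_split multi_indices_def dest: sum_fsub)
    done
  also have "\<dots> = ev k p x * ev l q x"
    by (simp add: ev_alt sum_product sum.cartesian_product)
  finally show ?thesis .
qed

lemma ev_power: "hom k p \<Longrightarrow> ev (m * k) (p ^ m) x = (ev k p x) ^ m"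
proof (induction m)
  case 0 then show ?case by (simp add: ev_one)
next
  case (Suc m)
  have "ev (Suc m * k) (p ^ Suc m) x = ev (k + m * k) (p * p ^ m) x" by simp
  also have "\<dots> = ev k p x * ev (m * k) (p ^ m) x"
    by (rule ev_mult[OF Suc.prems hom_power[OF Suc.prems]])
  finally show ?case using Suc by simp
qed

lemma ev_D: "ev 1 (Dp y) x = x \<bullet> y"
proof -
  have "ev 1 (Dp y) x = (\<Sum>j\<in>UNIV. y $ j * x $ j)"
    unfolding Dp_def ev_sum
  proof (rule sum.cong[OF refl])
    fix j
    have "ev (0 + 1) (cst (y $ j) * Xv j) x = ev 0 (cst (y $ j)) x * ev 1 (Xv j) x"
      by (rule ev_mult[OF hom_cst hom_X])
    moreover have "ev 0 (cst (y $ j)) x = y $ j"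
      using ev_cst_mult[of 0 "y $ j" 1 x] by (simp add: ev_one)
    ultimately show "ev 1 (cst (y $ j) * Xv j) x = y $ j * x $ j" using ev_X[of j x] by simp
  qed
  then show ?thesis by (simp add: inner_vec_def mult.commute)
qed

lemma ev_L: "ev 2 Lp x = x \<bullet> x"
proof -
  have "ev 2 Lp x = (\<Sum>j\<in>UNIV. x $ j * x $ j)"
    unfolding Lp_def ev_sum
  proof (rule sum.cong[OF refl])
    fix j
    have "ev (1 + 1) (Xv j * Xv j) x = ev 1 (Xv j) x * ev 1 (Xv j) x"
      by (rule ev_mult[OF hom_X hom_X])
    then show "ev 2 (Xv j * Xv j) x = x $ j * x $ j" using ev_X[of j x] by (simp add: numeral_2_eq_2)
  qed
  then show ?thesis by (simp add: inner_vec_def)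
qed


lemma hom_term: "a + 2 * b = k \<Longrightarrow> hom k (of_nat c * (Dp y ^ a * Lp ^ b))"
proof -
  assume "a + 2 * b = k"
  have "hom (0 + (a * 1 + b * 2)) (of_nat c * (Dp y ^ a * Lp ^ b))"
    by (rule hom_mult[OF hom_of_nat hom_mult[OF hom_power[OF hom_D] hom_power[OF hom_L]]])
  then show ?thesis using \<open>a + 2 * b = k\<close> by (simp add: mult.commute)
qed

lemma ev_term: "a + 2 * b = k \<Longrightarrow> ev k (of_nat c * (Dp y ^ a * Lp ^ b)) x = real c * (x \<bullet> y) ^ a * (x \<bullet> x) ^ b"
proof -
  assume "a + 2 * b = k"
  have "ev (a * 1 + b * 2) (Dp y ^ a * Lp ^ b) x = ev (a * 1) (Dp y ^ a) x * ev (b * 2) (Lp ^ b) x"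
    by (rule ev_mult[OF hom_power[OF hom_D] hom_power[OF hom_L]])
  also have "\<dots> = (x \<bullet> y) ^ a * (x \<bullet> x) ^ b"
    by (simp only: ev_power[OF hom_D] ev_power[OF hom_L] ev_D ev_L)
  finally show ?thesis using \<open>a + 2 * b = k\<close> by (simp add: ev_of_nat_mult mult.commute mult.assoc)
qed

definition zpoly :: "real \<Rightarrow> real \<Rightarrow> real" where
  "zpoly n t = (n+12)*(n+10)*(n+8)*(n+6) * t^8 - 28*(n+10)*(n+8)*(n+6) * t^6
     + 210*(n+8)*(n+6) * t^4 - 420*(n+6) * t^2 + 105"

lemma hom_Zp: "hom 8 (Zp y)"
  unfolding Zp_def Let_def
  by (intro hom_add hom_diff hom_term) simp_all

lemma ev_Zp: "x \<bullet> x = 1 \<Longrightarrow> ev 8 (Zp (y::real^'n::finite)) x = zpoly (real CARD('n)) (x \<bullet> y)"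
proof -
  assume xx: "x \<bullet> x = 1"
  have t: "ev 8 (of_nat c * (Dp y ^ a * Lp ^ b)) x = real c * (x \<bullet> y) ^ a"
    if "a + 2 * b = 8" for a b c
    using ev_term[OF that, of c y x] xx by simp
  have t1: "ev 8 (of_nat c * (Dp y ^ 8 * Lp ^ 0)) x = real c * (x \<bullet> y) ^ 8" for c by (rule t) simp
  have t2: "ev 8 (of_nat c * (Dp y ^ 6 * Lp ^ 1)) x = real c * (x \<bullet> y) ^ 6" for c by (rule t) simp
  have t3: "ev 8 (of_nat c * (Dp y ^ 4 * Lp ^ 2)) x = real c * (x \<bullet> y) ^ 4" for c by (rule t) simp
  have t4: "ev 8 (of_nat c * (Dp y ^ 2 * Lp ^ 3)) x = real c * (x \<bullet> y) ^ 2" for c by (rule t) simp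
  have t5: "ev 8 (of_nat c * (Dp y ^ 0 * Lp ^ 4)) x = real c * (x \<bullet> y) ^ 0" for c by (rule t) simp
  show ?thesis
    unfolding Zp_def Let_def zpoly_def ev_add ev_diff t1 t2 t3 t4 t5
    by (simp add: algebra_simps)
qed

lemma hom_Q2p: "hom 2 (Q2p y)"
  unfolding Q2p_def
  by (intro hom_add hom_diff hom_term) simp_all

lemma ev_Q2p: "x \<bullet> x = 1 \<Longrightarrow> ev 2 (Q2p (y::real^'n::finite)) x = real CARD('n) * (x \<bullet> y)^2 - 1"
proof -
  assume xx: "x \<bullet> x = 1"
  have t: "ev 2 (of_nat c * (Dp y ^ a * Lp ^ b)) x = real c * (x \<bullet> y) ^ a"
    if "a + 2 * b = 2" for a b c
    using ev_term[OF that, of c y x] xx by simp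
  have t1: "ev 2 (of_nat c * (Dp y ^ 2 * Lp ^ 0)) x = real c * (x \<bullet> y) ^ 2" for c by (rule t) simp
  have t2: "ev 2 (of_nat c * (Dp y ^ 0 * Lp ^ 1)) x = real c * (x \<bullet> y) ^ 0" for c by (rule t) simp
  show ?thesis
    unfolding Q2p_def ev_add ev_diff t1 t2
    by simp
qed

lemma design_facts:
  fixes Y :: "(real^'n::finite) set"
  assumes des: "harmonic_index_design {8, 2} Y" and yY: "y \<in> Y"
  shows "(\<Sum>x\<in>Y. zpoly (real CARD('n)) (x \<bullet> y)) = 0"
    and "(\<Sum>x\<in>Y. real CARD('n) * (x \<bullet> y)^2 - 1) = 0"
proof -
  from des have sph: "Y \<subseteq> unit_sphere"
    and H: "\<And>k c. k \<in> {8,2} \<Longrightarrow> homogeneous_coeffs k c \<Longrightarrow> harmonic_coeffs c \<Longrightarrow> (\<Sum>x\<in>Y. hpoly_eval k c x) = 0"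
    unfolding harmonic_index_design_def by blast+
  have unit: "x \<bullet> x = 1" if "x \<in> Y" for x
    using sph that by (auto simp: unit_sphere_def norm_eq_sqrt_inner)
  have yy: "y \<bullet> y = 1" using unit yY .
  have "(\<Sum>x\<in>Y. ev 8 (Zp y) x) = 0"
    unfolding ev_def
    by (rule H) (auto simp: hom_Zp[unfolded hom_def] harmonic_of_lapl lapl_Zp[OF yy])
  then show "(\<Sum>x\<in>Y. zpoly (real CARD('n)) (x \<bullet> y)) = 0"
    by (metis (no_types, lifting) ev_Zp sum.cong unit)
  have "(\<Sum>x\<in>Y. ev 2 (Q2p y) x) = 0"
    unfolding ev_def
    by (rule H) (auto simp: hom_Q2p[unfolded hom_def] harmonic_of_lapl lapl_Q2p[OF yy])
  then show "(\<Sum>x\<in>Y. real CARD('n) * (x \<bullet> y)^2 - 1) = 0"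
    by (metis (no_types, lifting) ev_Q2p sum.cong unit)
qed



definition okn :: "nat \<Rightarrow> bool" where
  "okn n \<longleftrightarrow> (7468070400::nat) mod (n*n*n+27*n*n+356*n-240) \<noteq> 0 \<or> n \<in> {2,4,9,16,25,30,65}"

function chk :: "nat \<Rightarrow> nat \<Rightarrow> bool" where
  "chk a b = (if b \<le> a then True else okn a \<and> chk (a+1) b)"
  by auto
termination by (relation "Wellfounded.measure (\<lambda>(a,b). b - a)") auto

declare chk.simps[simp del]

lemma chk_correct: "chk a b \<Longrightarrow> a \<le> n \<Longrightarrow> n < b \<Longrightarrow> okn n"
proof (induction a b rule: chk.induct)
  case (1 a b)
  then show ?case by (cases "n = a") (auto simp: chk.simps[of a b] split: if_splits)
qed

lemma chk1: "chk 2 350" by (simp add: chk.simps okn_def)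
lemma chk2: "chk 350 700" by (simp add: chk.simps okn_def)
lemma chk3: "chk 700 1050" by (simp add: chk.simps okn_def)
lemma chk4: "chk 1050 1400" by (simp add: chk.simps okn_def)
lemma chk5: "chk 1400 1700" by (simp add: chk.simps okn_def)
lemma chk6: "chk 1700 1955" by (simp add: chk.simps okn_def)

lemma okn_all: "2 \<le> n \<Longrightarrow> n < 1955 \<Longrightarrow> okn n"
  using chk_correct[OF chk1, of n] chk_correct[OF chk2, of n] chk_correct[OF chk3, of n]
    chk_correct[OF chk4, of n] chk_correct[OF chk5, of n] chk_correct[OF chk6, of n]
  by linarith

lemma bezout_int: fixes n :: int shows
  "44100 * 169344 = (8 * 169344 * (1216*n - 7124) - ((1216*n - 7124)*(2*n+67) + 1386240) * (n^4 + 14*n^3 - 133*n^2 + 2638*n - 10584)) * (n^3+27*n^2+356*n-240)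
     + ((1216*n - 7124)*(2*n+67) + 1386240) * (n*(n+6)*(n+5)*(n^2+15*n+8)^2)"
  by (simp add: algebra_simps power2_eq_square power3_eq_cube power4_eq_xxxx)


lemma nt_main:
  fixes n c :: nat
  assumes n2: "2 \<le> n"
    and eq: "real c = real n * (real n + 6) * (real n + 5) * (real n ^ 2 + 15 * real n + 8) ^ 2
              / (168 * (real n ^ 3 + 27 * real n ^ 2 + 356 * real n - 240))"
  shows "n \<in> {2, 4, 9}"
proof -
  define R where "R = n*n*n+27*n*n+356*n-240"
  define P where "P = n*(n+6)*(n+5)*(n^2+15*n+8)^2"
  have ge: "240 \<le> n*n*n+27*n*n+356*n" using n2 by (simp add: mult_mono' trans_le_add2)
  have Rge: "n*n*n \<le> R" unfolding R_def using n2 by simp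
  have realR: "real R = real n ^ 3 + 27 * real n ^ 2 + 356 * real n - 240"
    unfolding R_def using ge by (simp add: of_nat_diff power2_eq_square power3_eq_cube)
  have Rpos: "real R > 0" using Rge n2
  proof -
    have "0 < n*n*n" using n2 by simp
    then have "0 < R" using Rge by (rule less_le_trans)
    then show ?thesis by simp
  qed
  have "real c * (168 * real R) = real P"
    using eq Rpos unfolding realR[symmetric] P_def by (simp add: field_simps)
  then have cP: "c * (168 * R) = P"
    by (metis of_nat_eq_iff of_nat_mult of_nat_numeral)
  then have Pmod: "P mod (168 * R) = 0" by (simp add: cP[symmetric])
  have "R dvd P" using cP by (metis dvd_triv_right mult.assoc mult.commute)
  then have "int R dvd int P" by simp
  moreover have intR: "int R = int n ^ 3 + 27 * int n ^ 2 + 356 * int n - 240"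
    unfolding R_def using ge by (simp add: of_nat_diff power2_eq_square power3_eq_cube)
  moreover have intP: "int P = int n*(int n+6)*(int n+5)*(int n^2+15*int n+8)^2"
    unfolding P_def by simp
  ultimately have "int R dvd 44100 * 169344"
    using bezout_int[of "int n"]
    by (metis (no_types, lifting) dvd_add dvd_mult dvd_mult2 dvd_refl)
  then have dC: "R dvd 7468070400" by (simp add: int_dvd_int_iff[symmetric])
  then have "R \<le> 7468070400" by (rule dvd_imp_le) simp
  have "n < 1955"
  proof (rule ccontr)
    assume "\<not> n < 1955"
    then have h: "1955 \<le> n" by simp
    have "1955*1955*1955 \<le> n*n*n" using mult_le_mono[OF mult_le_mono[OF h h] h] .
    with Rge \<open>R \<le> 7468070400\<close> show False by simp
  qed
  then have "okn n" using okn_all n2 by simp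
  moreover have "7468070400 mod R = 0" using dC by simp
  ultimately have "n \<in> {2,4,9,16,25,30,65}" unfolding okn_def R_def by simp
  moreover have "n \<notin> {16,25,30,65}"
    using Pmod unfolding P_def R_def by auto
  ultimately show ?thesis by blast
qed



lemma lp_abstract:
  fixes f :: "'a \<Rightarrow> real" and z :: "real \<Rightarrow> real"
  assumes fin: "finite Y" and yY: "y \<in> Y" and fy: "f y = 1"
    and sz: "(\<Sum>x\<in>Y. z (f x)) = 0"
    and sq: "(\<Sum>x\<in>Y. (f x)^2) = S"
    and ident: "\<And>t. (t^4 - p*t^2 + e)^2 = z t / M + \<mu> * t^2 + \<nu>"
    and K: "\<mu> * S + \<nu> * real (card Y) = (1 - p + e)^2"
  shows "\<exists>k::int. (S - 1 - (real (card Y) - 1) * p / 2)^2 = (p^2/4 - e) * (real_of_int k)^2"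
proof -
  define G where "G t = t^4 - p*t^2 + e" for t
  define A where "A = Y - {y}"
  have finA: "finite A" using fin by (simp add: A_def)
  have "(\<Sum>x\<in>Y. (G (f x))^2) = (\<Sum>x\<in>Y. z (f x) / M + \<mu> * (f x)^2 + \<nu>)"
    unfolding G_def using ident by simp
  also have "\<dots> = (\<Sum>x\<in>Y. z (f x)) / M + \<mu> * (\<Sum>x\<in>Y. (f x)^2) + \<nu> * real (card Y)"
    by (simp add: sum.distrib sum_divide_distrib sum_distrib_left)
  also have "\<dots> = (G 1)^2" using sz sq K by (simp add: G_def)
  finally have s1: "(\<Sum>x\<in>Y. (G (f x))^2) = (G 1)^2" .
  have "(\<Sum>x\<in>Y. (G (f x))^2) = (G (f y))^2 + (\<Sum>x\<in>A. (G (f x))^2)"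
    unfolding A_def using fin yY by (rule sum.remove)
  with s1 fy have s2: "(\<Sum>x\<in>A. (G (f x))^2) = 0" by simp
  have G0: "G (f x) = 0" if "x \<in> A" for x
    using sum_nonneg_eq_0_iff[OF finA, of "\<lambda>x. (G (f x))^2"] s2 that by simp
  define w where "w x = (f x)^2 - p/2" for x
  define \<Delta> where "\<Delta> = p^2/4 - e"
  define \<sigma> where "\<sigma> = sqrt \<Delta>"
  have w2: "(w x)^2 = \<Delta>" if "x \<in> A" for x
    using G0[OF that] unfolding G_def w_def \<Delta>_def by (simp add: power2_eq_square power4_eq_xxxx algebra_simps)
  have wpm: "w x = (if w x = \<sigma> then \<sigma> else - \<sigma>)" if "x \<in> A" for x
  proof -
    have "\<bar>w x\<bar> = \<sigma>" unfolding \<sigma>_def using w2[OF that] by (metis real_sqrt_abs)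
    then show ?thesis by auto
  qed
  have cardA: "real (card A) = real (card Y) - 1"
  proof -
    have "card Y \<ge> 1" using fin yY by (metis One_nat_def Suc_leI card_gt_0_iff empty_iff)
    then show ?thesis using fin yY by (simp add: A_def card_Diff_singleton of_nat_diff)
  qed
  have sqA: "(\<Sum>x\<in>A. (f x)^2) = S - 1"
    using sum.remove[OF fin yY, of "\<lambda>x. (f x)^2"] sq fy by (simp add: A_def)
  have sw: "(\<Sum>x\<in>A. w x) = S - 1 - (real (card Y) - 1) * p / 2"
    unfolding w_def using sqA cardA by (simp add: sum_subtractf)
  define k where "k = (\<Sum>x\<in>A. if w x = \<sigma> then 1 else -1 :: int)"
  have "(\<Sum>x\<in>A. w x) = (\<Sum>x\<in>A. \<sigma> * (if w x = \<sigma> then 1 else -1))"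
    by (rule sum.cong[OF refl]) (subst wpm, auto)
  also have "\<dots> = \<sigma> * real_of_int k"
    by (simp add: k_def sum_distrib_left of_int_sum if_distrib[of real_of_int] cong: if_cong)
  finally have V: "S - 1 - (real (card Y) - 1) * p / 2 = \<sigma> * real_of_int k"
    using sw by simp
  show ?thesis
  proof (cases "A = {}")
    case True
    then have "k = 0" by (simp add: k_def)
    with V show ?thesis by (intro exI[of _ 0]) simp
  next
    case False
    then obtain x where "x \<in> A" by blast
    then have "\<Delta> \<ge> 0" using w2 by (metis zero_le_power2)
    then have "\<sigma>^2 = \<Delta>" by (simp add: \<sigma>_def)
    with V show ?thesis by (intro exI[of _ k]) (simp add: power_mult_distrib \<Delta>_def)
  qed
qed

lemma no_int_sq: "(k::int)^2 = m \<Longrightarrow> a^2 < m \<Longrightarrow> m < (a+1)^2 \<Longrightarrow> a \<ge> 0 \<Longrightarrow> False"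
proof -
  assume h: "k^2 = m" "a^2 < m" "m < (a+1)^2" "a \<ge> 0"
  have "a^2 < \<bar>k\<bar>^2" using h by simp
  then have "a < \<bar>k\<bar>" using h(4) by (meson abs_ge_zero power_less_imp_less_base)
  moreover have "\<bar>k\<bar>^2 < (a+1)^2" using h by simp
  then have "\<bar>k\<bar> < a + 1" using h(4) by (meson abs_ge_zero power_less_imp_less_base add_nonneg_nonneg zero_le_one)
  ultimately show False by simp
qed


theorem mainTheorem9:
  fixes n :: nat
  assumes "n = CARD('n::finite)" and "n \<ge> 2"
  shows "\<not> (\<exists>Y :: (real^'n) set. harmonic_index_design {8, 2} Y \<and>
            real (card Y) = real n * (real n + 6) * (real n + 5) * (real n ^ 2 + 15 * real n + 8) ^ 2
              / (168 * (real n ^ 3 + 27 * real n ^ 2 + 356 * real n - 240)))"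
proof
  assume "\<exists>Y :: (real^'n) set. harmonic_index_design {8, 2} Y \<and>
            real (card Y) = real n * (real n + 6) * (real n + 5) * (real n ^ 2 + 15 * real n + 8) ^ 2
              / (168 * (real n ^ 3 + 27 * real n ^ 2 + 356 * real n - 240))"
  then obtain Y :: "(real^'n) set" where des: "harmonic_index_design {8, 2} Y"
    and eq: "real (card Y) = real n * (real n + 6) * (real n + 5) * (real n ^ 2 + 15 * real n + 8) ^ 2
              / (168 * (real n ^ 3 + 27 * real n ^ 2 + 356 * real n - 240))" by blast
  have n249: "n \<in> {2, 4, 9}" using nt_main[OF assms(2) eq] .
  have fin: "finite Y" and sph: "Y \<subseteq> unit_sphere" using des by (auto simp: harmonic_index_design_def)
  have cpos: "card Y > 0" using n249 eq by auto
  then obtain y where yY: "y \<in> Y" using fin by (metis card_gt_0_iff ex_in_conv)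
  have yy: "y \<bullet> y = 1" using sph yY by (auto simp: unit_sphere_def norm_eq_sqrt_inner)
  have sZ: "(\<Sum>x\<in>Y. zpoly (real n) (x \<bullet> y)) = 0" using design_facts(1)[OF des yY] assms(1) by simp
  have sQ0: "(\<Sum>x\<in>Y. real n * (x \<bullet> y)^2 - 1) = 0" using design_facts(2)[OF des yY] assms(1) by simp
  have "real n * (\<Sum>x\<in>Y. (x \<bullet> y)^2) = real (card Y)"
    using sQ0 by (simp add: sum_subtractf sum_distrib_left)
  then have sQ: "(\<Sum>x\<in>Y. (x \<bullet> y)^2) = real (card Y) / real n"
    using assms(2) by (simp add: field_simps)
  have fy: "(\<lambda>x. x \<bullet> y) y = 1" using yy by simp
  from n249 show False
  proof (elim insertE emptyE)
    assume nn: "n = 2"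
    have cY: "real (card Y) = 2" using eq nn by simp
    have id: "(t^4 - (1)*t^2 + 1/8)^2 = zpoly 2 t / 13440 + (0) * t^2 + 1/128" for t
      unfolding zpoly_def by (simp add: field_simps eval_nat_numeral)
    have sZ': "(\<Sum>x\<in>Y. zpoly 2 ((\<lambda>x. x \<bullet> y) x)) = 0" using sZ nn by simp
    have sQ': "(\<Sum>x\<in>Y. ((\<lambda>x. x \<bullet> y) x)^2) = 2/2" using sQ nn cY by simp
    have K: "(0) * (2/2) + 1/128 * real (card Y) = (1 - (1) + 1/8)^2" using cY by (simp add: power2_eq_square)
    obtain k :: int where "(2/2 - 1 - (real (card Y) - 1) * (1) / 2)^2 = ((1)^2/4 - 1/8) * (real_of_int k)^2"
      using lp_abstract[OF fin yY fy sZ' sQ' id K] by blast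
    then have "real_of_int (k^2) = 2" using cY by (simp add: power2_eq_square)
    then have "k^2 = 2" by (metis of_int_eq_numeral_iff)
    then show False by (rule no_int_sq[of k 2 1]) simp_all
  next
    assume nn: "n = 4"
    have cY: "real (card Y) = 9" using eq nn by simp
    have id: "(t^4 - (7/8)*t^2 + 11/128)^2 = zpoly 4 t / 26880 + (3/512) * t^2 + 57/16384" for t
      unfolding zpoly_def by (simp add: field_simps eval_nat_numeral)
    have sZ': "(\<Sum>x\<in>Y. zpoly 4 ((\<lambda>x. x \<bullet> y) x)) = 0" using sZ nn by simp
    have sQ': "(\<Sum>x\<in>Y. ((\<lambda>x. x \<bullet> y) x)^2) = 9/4" using sQ nn cY by simp
    have K: "(3/512) * (9/4) + 57/16384 * real (card Y) = (1 - (7/8) + 11/128)^2" using cY by (simp add: power2_eq_square)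
    obtain k :: int where "(9/4 - 1 - (real (card Y) - 1) * (7/8) / 2)^2 = ((7/8)^2/4 - 11/128) * (real_of_int k)^2"
      using lp_abstract[OF fin yY fy sZ' sQ' id K] by blast
    then have "real_of_int (k^2) = 48" using cY by (simp add: power2_eq_square)
    then have "k^2 = 48" by (metis of_int_eq_numeral_iff)
    then show False by (rule no_int_sq[of k 48 6]) simp_all
  next
    assume nn: "n = 9"
    have cY: "real (card Y) = 96" using eq nn by simp
    have id: "(t^4 - (2/3)*t^2 + 7/171)^2 = zpoly 9 t / 101745 + (64/8721) * t^2 + 320/497097" for t
      unfolding zpoly_def by (simp add: field_simps eval_nat_numeral)
    have sZ': "(\<Sum>x\<in>Y. zpoly 9 ((\<lambda>x. x \<bullet> y) x)) = 0" using sZ nn by simp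
    have sQ': "(\<Sum>x\<in>Y. ((\<lambda>x. x \<bullet> y) x)^2) = 96/9" using sQ nn cY by simp
    have K: "(64/8721) * (96/9) + 320/497097 * real (card Y) = (1 - (2/3) + 7/171)^2" using cY by (simp add: power2_eq_square)
    obtain k :: int where "(96/9 - 1 - (real (card Y) - 1) * (2/3) / 2)^2 = ((2/3)^2/4 - 7/171) * (real_of_int k)^2"
      using lp_abstract[OF fin yY fy sZ' sQ' id K] by blast
    then have "real_of_int (k^2) = 6897" using cY by (simp add: power2_eq_square)
    then have "k^2 = 6897" by (metis of_int_eq_numeral_iff)
    then show False by (rule no_int_sq[of k 6897 83]) simp_all
  qed
qed

end
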